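(* Let $G_1,\dots,G_r$ and $H_1,\dots,H_r$ be finite simple graphs, $S=\bigoplus_{d=1}^r\widehat{G_d}\otimes\mathcal{C}_d$ and $T=\bigoplus_{d=1}^r\widehat{H_d}\otimes\mathcal{C}_d$. The following are equivalent: (1) $T\le S$; (2) there exist a function $\varphi:\bigsqcup_{d=1}^rV(H_d)\to\bigsqcup_{d=1}^rV(G_d)$ and isometries $U_h:\mathbb{C}^{\pi(h)}\to\mathbb{C}^{\pi(\varphi(h))}$ for $h\in\bigsqcup_{d}V(H_d)$ such that for all $h,h'$: if $h\not\simeq h'$ then ($\varphi(h)\not\simeq\varphi(h')$ or $U_h^*U_{h'}=0$); and if $h\simeq h'$ and $\varphi(h)\simeq\varphi(h')$ then $U_h^*U_{h'}=cI_{\pi(h)}$ for some $c\in\mathbb{C}$.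
   Context: A noncommutative graph is a subspace $S\subseteq B(\mathcal{H})$ ($\mathcal{H}$ finite-dimensional complex Hilbert space) with $I\in S$, $S^*=S$. A cohomomorphism from $T\subseteq B(\mathcal{K})$ to $S\subseteq B(\mathcal{H})$ is a finite family of linear maps $E_i:\mathcal{K}\to\mathcal{H}$ with $\sum_iE_i^*E_i=I$ and $E_i^*SE_j\subseteq T$ for all $i,j$; write $T\le S$ if one exists. Tensor product and direct sum of noncommutative graphs are $\operatorname{span}\{A\otimes B\}$ and $\{A\oplus B\}$. For a finite simple graph $G$, $\widehat{G}=\operatorname{span}\{|x\rangle\langle x'|:x,x'\in V(G),\ x=x'\text{ or }x\sim x'\}\subseteq B(\mathbb{C}^{V(G)})$; $\mathcal{C}_d=\mathbb{C}I\subseteq B(\mathbb{C}^d)$. For a direct sum $\bigoplus_{d=1}^r\widehat{G_d}\otimes\mathcal{C}_d$, $\pi:\bigsqcup_dV(G_d)\to\{1,\dots,r\}$ sends $g\in V(G_d)$ to $d$, and for $g\in V(G_d)$, $g'\in V(G_{d'})$ we write $g\simeq g'$ iff $d=d'$ and $g,g'$ are equal or adjacent in $G_d$ (similarly for the $H_d$). *)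

theory Defs
  imports "Jordan_Normal_Form.Schur_Decomposition"
begin

text \<open>Matrices over the complex numbers represent operators on finite-dimensional
  Hilbert spaces; a noncommutative graph on C^n is a set of n x n matrices.\<close>

definition cohom :: "complex mat set \<Rightarrow> nat \<Rightarrow> complex mat set \<Rightarrow> nat \<Rightarrow> bool" where
  "cohom T k S n \<longleftrightarrow> (\<exists>Es :: complex mat list.
      (\<forall>E\<in>set Es. E \<in> carrier_mat n k) \<and>
      foldr (+) (map (\<lambda>E. mat_adjoint E * E) Es) (0\<^sub>m k k) = 1\<^sub>m k \<and>
      (\<forall>Ei\<in>set Es. \<forall>Ej\<in>set Es. \<forall>A\<in>S. mat_adjoint Ei * A * Ej \<in> T))"

text \<open>Kronecker product A (x) B (basis of C^a (x) C^b indexed by i*b + k).\<close>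
definition kron :: "complex mat \<Rightarrow> complex mat \<Rightarrow> complex mat" where
  "kron A B = mat (dim_row A * dim_row B) (dim_col A * dim_col B)
     (\<lambda>(i,j). A $$ (i div dim_row B, j div dim_col B) * B $$ (i mod dim_row B, j mod dim_col B))"

text \<open>Graph G on vertex set {0..<n} with adjacency E:
  G-hat = span of |x><x'| with x = x' or x ~ x'.\<close>
definition ghat :: "nat \<Rightarrow> (nat \<Rightarrow> nat \<Rightarrow> bool) \<Rightarrow> complex mat set" where
  "ghat n E = {A \<in> carrier_mat n n. \<forall>x<n. \<forall>x'<n. A $$ (x,x') \<noteq> 0 \<longrightarrow> x = x' \<or> E x x'}"

definition cI :: "nat \<Rightarrow> complex mat set" where
  "cI d = {c \<cdot>\<^sub>m 1\<^sub>m d | c. True}"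

definition ncg_tensor :: "nat \<Rightarrow> complex mat set \<Rightarrow> nat \<Rightarrow> complex mat set \<Rightarrow> complex mat set" where
  "ncg_tensor a S b T = {foldr (+) (map (\<lambda>(c,A,B). c \<cdot>\<^sub>m kron A B) L) (0\<^sub>m (a*b) (a*b)) | L.
      \<forall>(c,A,B)\<in>set L. A \<in> S \<and> B \<in> T}"

fun block_diag :: "complex mat list \<Rightarrow> complex mat" where
  "block_diag [] = 0\<^sub>m 0 0"
| "block_diag (A # As) = (let B = block_diag As in
     four_block_mat A (0\<^sub>m (dim_row A) (dim_col B)) (0\<^sub>m (dim_row B) (dim_col A)) B)"

definition ncg_dsum :: "nat \<Rightarrow> (nat \<Rightarrow> complex mat set) \<Rightarrow> complex mat set" where
  "ncg_dsum r S = {block_diag (map M [1..<r+1]) | M. \<forall>d\<in>{1..r}. M d \<in> S d}"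

text \<open>The noncommutative graph bigoplus_{d=1}^r G_d-hat (x) C_d, where G_d has
  vertex set {0..<n d} and adjacency E d.\<close>
definition ncg_S :: "nat \<Rightarrow> (nat \<Rightarrow> nat) \<Rightarrow> (nat \<Rightarrow> nat \<Rightarrow> nat \<Rightarrow> bool) \<Rightarrow> complex mat set" where
  "ncg_S r n E = ncg_dsum r (\<lambda>d. ncg_tensor (n d) (ghat (n d) (E d)) d (cI d))"

definition ncg_dim :: "nat \<Rightarrow> (nat \<Rightarrow> nat) \<Rightarrow> nat" where
  "ncg_dim r n = (\<Sum>d\<in>{1..r}. n d * d)"

text \<open>Disjoint union of the vertex sets: pairs (d, x) with 1 <= d <= r, x < n d;
  pi (d, x) = d.\<close>
definition vtx :: "nat \<Rightarrow> (nat \<Rightarrow> nat) \<Rightarrow> (nat \<times> nat) set" where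
  "vtx r n = {(d, x). d \<in> {1..r} \<and> x < n d}"

definition piv :: "nat \<times> nat \<Rightarrow> nat" where
  "piv g = fst g"

definition simeq :: "(nat \<Rightarrow> nat \<Rightarrow> nat \<Rightarrow> bool) \<Rightarrow> nat \<times> nat \<Rightarrow> nat \<times> nat \<Rightarrow> bool" where
  "simeq E g g' \<longleftrightarrow> fst g = fst g' \<and> (snd g = snd g' \<or> E (fst g) (snd g) (snd g'))"

definition simple_graph :: "nat \<Rightarrow> (nat \<Rightarrow> nat \<Rightarrow> bool) \<Rightarrow> bool" where
  "simple_graph n E \<longleftrightarrow> (\<forall>x<n. \<not> E x x) \<and> (\<forall>x<n. \<forall>y<n. E x y \<longleftrightarrow> E y x)"

end

theory Submission
  imports Defs
begin

lemma adj_carrier: "A \<in> carrier_mat n k \<Longrightarrow> mat_adjoint A \<in> carrier_mat k n"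
  unfolding mat_adjoint_def by auto

lemma adj_index: "A \<in> carrier_mat n k \<Longrightarrow> i < k \<Longrightarrow> j < n \<Longrightarrow>
   mat_adjoint A $$ (i,j) = cnj (A $$ (j,i))"
  unfolding mat_adjoint_def by (auto simp: mat_of_rows_index)

lemma foldr_sum:
  assumes "\<forall>x\<in>set xs. f x \<in> carrier_mat m m"
  shows "foldr (+) (map f xs) (0\<^sub>m m m) \<in> carrier_mat m m \<and>
    (\<forall>i<m. \<forall>j<m. foldr (+) (map f xs) (0\<^sub>m m m) $$ (i,j) = (\<Sum>x\<leftarrow>xs. f x $$ (i,j)))"
  using assms by (induction xs) auto

lemma mult_entry:
  assumes "A \<in> carrier_mat m1 N" "B \<in> carrier_mat N m2" "i < m1" "j < m2"
  shows "(A * B) $$ (i,j) = (\<Sum>a<N. A$$(i,a) * B$$(a,j))"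
proof -
  have "(A * B) $$ (i,j) = row A i \<bullet> col B j" using assms by (intro index_mult_mat) auto
  also have "\<dots> = (\<Sum>a\<in>{0..<N}. row A i $ a * col B j $ a)" unfolding scalar_prod_def using assms by simp
  also have "\<dots> = (\<Sum>a<N. A$$(i,a) * B$$(a,j))"
    using assms by (intro sum.cong) auto
  finally show ?thesis .
qed

lemma double_entry:
  assumes "A \<in> carrier_mat N m1" "B \<in> carrier_mat N m2" "i < m1" "j < m2"
  shows "(mat_adjoint A * B) $$ (i,j) = (\<Sum>a<N. cnj (A$$(a,i)) * B$$(a,j))"
  unfolding mult_entry[OF adj_carrier[OF assms(1)] assms(2-4)]
  using assms by (intro sum.cong) (auto simp: adj_index)

lemma triple_entry:
  assumes "A \<in> carrier_mat N m1" "X \<in> carrier_mat N N" "B \<in> carrier_mat N m2" "i < m1" "j < m2"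
  shows "(mat_adjoint A * X * B) $$ (i,j) = (\<Sum>b<N. \<Sum>a<N. cnj (A$$(a,i)) * X$$(a,b) * B$$(b,j))"
proof -
  have c: "mat_adjoint A * X \<in> carrier_mat m1 N" using adj_carrier[OF assms(1)] assms by auto
  have "(mat_adjoint A * X * B) $$ (i,j) = (\<Sum>b<N. (mat_adjoint A * X) $$ (i,b) * B$$(b,j))"
    by (rule mult_entry[OF c assms(3-5)])
  also have "\<dots> = (\<Sum>b<N. (\<Sum>a<N. cnj (A$$(a,i)) * X$$(a,b)) * B$$(b,j))"
    using assms by (intro sum.cong refl arg_cong2[where f="(*)"] double_entry) auto
  also have "\<dots> = (\<Sum>b<N. \<Sum>a<N. cnj (A$$(a,i)) * X$$(a,b) * B$$(b,j))"
    by (simp add: sum_distrib_right)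
  finally show ?thesis .
qed
definition so :: "(nat \<Rightarrow> nat) \<Rightarrow> nat \<Rightarrow> nat \<Rightarrow> nat" where
  "so sz a d = (\<Sum>d'\<in>{a..<d}. sz d')"

lemma so_Suc: "a \<le> d \<Longrightarrow> so sz a (Suc d) = so sz a d + sz d"
  unfolding so_def by simp

lemma so_split: "a < d \<Longrightarrow> so sz a d = sz a + so sz (Suc a) d"
  unfolding so_def by (simp add: sum.atLeast_Suc_lessThan)

lemma so_self[simp]: "so sz a a = 0" unfolding so_def by simp

lemma so_mono: "d \<le> d' \<Longrightarrow> so sz a d \<le> so sz a d'"
  unfolding so_def by (rule sum_mono2) auto

lemma decomp: "p < so sz a b \<Longrightarrow> \<exists>d\<in>{a..<b}. \<exists>i<sz d. p = so sz a d + i"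
proof (induction b)
  case 0 then show ?case by (simp add: so_def)
next
  case (Suc b)
  show ?case
  proof (cases "a \<le> b")
    case True
    show ?thesis
    proof (cases "p < so sz a b")
      case True then show ?thesis using Suc.IH by fastforce
    next
      case False
      then have "p - so sz a b < sz b" using Suc.prems so_Suc[OF \<open>a \<le> b\<close>] by simp
      then show ?thesis using False \<open>a \<le> b\<close> by (intro bexI[of _ b]) auto
    qed
  next
    case False then show ?thesis using Suc.prems by (simp add: so_def)
  qed
qed

lemma fb_idx:
  assumes A: "A \<in> carrier_mat s s" and B: "B \<in> carrier_mat t t"
  defines "F \<equiv> four_block_mat A (0\<^sub>m s t) (0\<^sub>m t s) B"
  shows "i < s \<Longrightarrow> j < s \<Longrightarrow> F $$ (i,j) = A $$ (i,j)"
    and "i < s \<Longrightarrow> j < t \<Longrightarrow> F $$ (i,s+j) = 0"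
    and "i < t \<Longrightarrow> j < s \<Longrightarrow> F $$ (s+i,j) = 0"
    and "i < t \<Longrightarrow> j < t \<Longrightarrow> F $$ (s+i,s+j) = B $$ (i,j)"
  using A B unfolding F_def by (subst index_mat_four_block; force)+

lemma bd:
  assumes "\<forall>d\<in>{a..<b}. M d \<in> carrier_mat (sz d) (sz d)"
  shows "block_diag (map M [a..<b]) \<in> carrier_mat (so sz a b) (so sz a b) \<and>
    (\<forall>d\<in>{a..<b}. \<forall>d'\<in>{a..<b}. \<forall>i<sz d. \<forall>j<sz d'.
       block_diag (map M [a..<b]) $$ (so sz a d + i, so sz a d' + j) = (if d = d' then M d $$ (i,j) else 0))"
  using assms
proof (induction "b - a" arbitrary: a)
  case 0
  then show ?case by (simp add: so_def)
next
  case (Suc m)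
  then have ab: "a < b" by simp
  have ups: "[a..<b] = a # [Suc a..<b]" using ab by (simp add: upt_conv_Cons)
  define B where "B = block_diag (map M [Suc a..<b])"
  have pr: "\<forall>d\<in>{Suc a..<b}. M d \<in> carrier_mat (sz d) (sz d)" using Suc.prems by auto
  have m: "m = b - Suc a" using Suc.hyps(2) by simp
  have IH: "B \<in> carrier_mat (so sz (Suc a) b) (so sz (Suc a) b) \<and>
    (\<forall>d\<in>{Suc a..<b}. \<forall>d'\<in>{Suc a..<b}. \<forall>i<sz d. \<forall>j<sz d'.
       B $$ (so sz (Suc a) d + i, so sz (Suc a) d' + j) = (if d = d' then M d $$ (i,j) else 0))"
    unfolding B_def by (rule Suc.hyps(1)[OF m pr])
  have Bc: "B \<in> carrier_mat (so sz (Suc a) b) (so sz (Suc a) b)" using IH by blast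
  have Ma: "M a \<in> carrier_mat (sz a) (sz a)" using Suc.prems ab by auto
  have eq: "block_diag (map M [a..<b]) = four_block_mat (M a) (0\<^sub>m (sz a) (so sz (Suc a) b)) (0\<^sub>m (so sz (Suc a) b) (sz a)) B"
  proof -
    have "block_diag (map M [a..<b]) = block_diag (M a # map M [Suc a..<b])" unfolding ups by simp
    also have "\<dots> = four_block_mat (M a) (0\<^sub>m (dim_row (M a)) (dim_col B)) (0\<^sub>m (dim_row B) (dim_col (M a))) B"
      unfolding block_diag.simps(2) Let_def B_def ..
    finally show ?thesis using Ma Bc by simp
  qed
  have sab: "so sz a b = sz a + so sz (Suc a) b" using so_split[OF ab] .
  note F = fb_idx[OF Ma Bc]
  show ?case
  proof (intro conjI ballI allI impI)
    show "block_diag (map M [a..<b]) \<in> carrier_mat (so sz a b) (so sz a b)"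
      unfolding eq sab using Ma Bc by (rule four_block_carrier_mat)
  next
    fix d d' i j assume d: "d \<in> {a..<b}" and d': "d' \<in> {a..<b}" and i: "i < sz d" and j: "j < sz d'"
    have bnd: "so sz (Suc a) d + sz d \<le> so sz (Suc a) b" if "d \<in> {Suc a..<b}" for d
      using so_Suc[of "Suc a" d sz] so_mono[of "Suc d" b sz "Suc a"] that by auto
    show "block_diag (map M [a..<b]) $$ (so sz a d + i, so sz a d' + j) = (if d = d' then M d $$ (i,j) else 0)"
    proof (cases "d = a")
      case True
      then show ?thesis
      proof (cases "d' = a")
        case True then show ?thesis using \<open>d = a\<close> i j F(1) unfolding eq by simp
      next
        case False
        then have sd': "so sz a d' = sz a + so sz (Suc a) d'" and dS': "d' \<in> {Suc a..<b}" using d' so_split by auto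
        have "so sz (Suc a) d' + j < so sz (Suc a) b" using bnd[OF dS'] j by simp
        then show ?thesis using \<open>d = a\<close> False i F(2) unfolding eq sd' by (simp add: add.assoc)
      qed
    next
      case False
      then have sd: "so sz a d = sz a + so sz (Suc a) d" and dS: "d \<in> {Suc a..<b}" using d so_split by auto
      have id: "so sz (Suc a) d + i < so sz (Suc a) b" using bnd[OF dS] i by simp
      show ?thesis
      proof (cases "d' = a")
        case True then show ?thesis using False j id F(3) unfolding eq sd by (simp add: add.assoc)
      next
        case False
        then have sd': "so sz a d' = sz a + so sz (Suc a) d'" and dS': "d' \<in> {Suc a..<b}" using d' so_split by auto
        have jd: "so sz (Suc a) d' + j < so sz (Suc a) b" using bnd[OF dS'] j by simp
        have "block_diag (map M [a..<b]) $$ (so sz a d + i, so sz a d' + j) =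
              B $$ (so sz (Suc a) d + i, so sz (Suc a) d' + j)"
          unfolding eq sd sd' using F(4)[OF id jd] by (simp add: add.assoc)
        then show ?thesis using IH dS dS' i j by simp
      qed
    qed
  qed
qed

lemma lt_mult_aux: "x < (n::nat) \<Longrightarrow> k < d \<Longrightarrow> x*d + k < n*d"
proof -
  assume "x < n" "k < d"
  then have "x*d + k < Suc x * d" by simp
  also have "\<dots> \<le> n*d" using \<open>x < n\<close> by (intro mult_le_mono1) simp
  finally show ?thesis .
qed

lemma kron_index: "i < dim_row A * dim_row B \<Longrightarrow> j < dim_col A * dim_col B \<Longrightarrow>
  kron A B $$ (i,j) = A $$ (i div dim_row B, j div dim_col B) * B $$ (i mod dim_row B, j mod dim_col B)"
  unfolding kron_def by simp

lemma kron_dim[simp]: "dim_row (kron A B) = dim_row A * dim_row B" "dim_col (kron A B) = dim_col A * dim_col B"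
  unfolding kron_def by simp_all

lemma kron_I_carrier: "A \<in> carrier_mat n n \<Longrightarrow> kron A (1\<^sub>m d) \<in> carrier_mat (n*d) (n*d)"
  by (intro carrier_matI) (auto dest: carrier_matD)

lemma kron_I_index: "A \<in> carrier_mat n n \<Longrightarrow> x<n \<Longrightarrow> x'<n \<Longrightarrow> k<d \<Longrightarrow> k'<d \<Longrightarrow>
  kron A (1\<^sub>m d) $$ (x*d+k, x'*d+k') = (if k = k' then A$$(x,x') else 0)"
proof -
  assume A: "A \<in> carrier_mat n n" and x: "x<n" "x'<n" and k: "k<d" "k'<d"
  have "kron A (1\<^sub>m d) $$ (x*d+k, x'*d+k') = A $$ ((x*d+k) div d, (x'*d+k') div d) * (1\<^sub>m d) $$ ((x*d+k) mod d, (x'*d+k') mod d)"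
  proof -
    have dA: "dim_row A = n" "dim_col A = n" using A by auto
    have d1: "dim_row (1\<^sub>m d) = d" "dim_col (1\<^sub>m d) = d" by simp_all
    show ?thesis
      using kron_index[of "x*d+k" A "1\<^sub>m d" "x'*d+k'", unfolded dA d1] lt_mult_aux[OF x(1) k(1)] lt_mult_aux[OF x(2) k(2)]
      by blast
  qed
  also have "\<dots> = A $$ (x, x') * (1\<^sub>m d) $$ (k, k')" using k by simp
  also have "\<dots> = (if k = k' then A$$(x,x') else 0)" using k by simp
  finally show ?thesis .
qed

lemma tensor_char:
  assumes d: "0 < d"
  shows "ncg_tensor n (ghat n E) d (cI d) = {kron A (1\<^sub>m d) | A. A \<in> ghat n E}"
proof
  show "{kron A (1\<^sub>m d) | A. A \<in> ghat n E} \<subseteq> ncg_tensor n (ghat n E) d (cI d)"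
  proof
    fix Y assume "Y \<in> {kron A (1\<^sub>m d) | A. A \<in> ghat n E}"
    then obtain A where A: "A \<in> ghat n E" "Y = kron A (1\<^sub>m d)" by blast
    have Ac: "A \<in> carrier_mat n n" using A unfolding ghat_def by auto
    have I: "1\<^sub>m d \<in> cI d" unfolding cI_def by (intro CollectI exI[of _ 1]) auto
    have "Y = foldr (+) (map (\<lambda>(c,A,B). c \<cdot>\<^sub>m kron A B) [(1, A, 1\<^sub>m d)]) (0\<^sub>m (n*d) (n*d))"
      using A kron_I_carrier[OF Ac, of d] by (simp, intro eq_matI, auto)
    then show "Y \<in> ncg_tensor n (ghat n E) d (cI d)" unfolding ncg_tensor_def using A I
      by (intro CollectI exI[of _ "[(1, A, 1\<^sub>m d)]"]) auto
  qed
next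
  have main: "\<forall>(c,A,B)\<in>set L. A \<in> ghat n E \<and> B \<in> cI d \<Longrightarrow>
     \<exists>A'. A' \<in> ghat n E \<and> foldr (+) (map (\<lambda>(c,A,B). c \<cdot>\<^sub>m kron A B) L) (0\<^sub>m (n*d) (n*d)) = kron A' (1\<^sub>m d)"
    for L
  proof (induction L)
    case Nil
    have "0\<^sub>m n n \<in> ghat n E" unfolding ghat_def by auto
    moreover have "0\<^sub>m (n*d) (n*d) = kron (0\<^sub>m n n) (1\<^sub>m d)"
    proof (rule eq_matI)
      fix i j assume "i < dim_row (kron (0\<^sub>m n n) (1\<^sub>m d))" "j < dim_col (kron (0\<^sub>m n n) (1\<^sub>m d))"
      then have i: "i < n*d" and j: "j < n*d" by auto
      have u: "i div d < n" "j div d < n" using i j less_mult_imp_div_less by blast+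
      show "0\<^sub>m (n*d) (n*d) $$ (i,j) = kron (0\<^sub>m n n) (1\<^sub>m d) $$ (i,j)"
        using i j u by (simp add: kron_index)
    qed auto
    ultimately show ?case by auto
  next
    case (Cons t L)
    obtain c A B where t: "t = (c,A,B)" by (cases t) auto
    from Cons obtain A' where A': "A' \<in> ghat n E"
      "foldr (+) (map (\<lambda>(c,A,B). c \<cdot>\<^sub>m kron A B) L) (0\<^sub>m (n*d) (n*d)) = kron A' (1\<^sub>m d)" by auto
    have A: "A \<in> ghat n E" and B: "B \<in> cI d" using Cons.prems t by auto
    obtain c' where B': "B = c' \<cdot>\<^sub>m 1\<^sub>m d" using B unfolding cI_def by auto
    have Ac: "A \<in> carrier_mat n n" and A'c: "A' \<in> carrier_mat n n" using A A' unfolding ghat_def by auto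
    define A'' where "A'' = (c*c') \<cdot>\<^sub>m A + A'"
    have "A'' \<in> ghat n E"
    proof -
      have c1: "A'' \<in> carrier_mat n n" using Ac A'c by (simp add: A''_def)
      have c2: "\<forall>x<n. \<forall>x'<n. A''$$(x,x') \<noteq> 0 \<longrightarrow> x = x' \<or> E x x'"
      proof (intro allI impI)
        fix x x' assume x: "x < n" and x': "x' < n" and nz: "A''$$(x,x') \<noteq> 0"
        have "A''$$(x,x') = c*c'*A$$(x,x') + A'$$(x,x')" using Ac A'c x x' by (simp add: A''_def)
        then have "A$$(x,x') \<noteq> 0 \<or> A'$$(x,x') \<noteq> 0" using nz by auto
        then show "x = x' \<or> E x x'" using A A' x x' unfolding ghat_def by blast
      qed
      show ?thesis using c1 c2 unfolding ghat_def by blast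
    qed
    have A''c: "A'' \<in> carrier_mat n n" using Ac A'c by (simp add: A''_def)
    have Bc: "B \<in> carrier_mat d d" using B' by simp
    have dims: "kron A B \<in> carrier_mat (n*d) (n*d)" "kron A' (1\<^sub>m d) \<in> carrier_mat (n*d) (n*d)"
       "kron A'' (1\<^sub>m d) \<in> carrier_mat (n*d) (n*d)"
      using Ac A'c A''c Bc by (auto intro!: carrier_matI dest: carrier_matD)
    moreover have "c \<cdot>\<^sub>m kron A B + kron A' (1\<^sub>m d) = kron A'' (1\<^sub>m d)"
    proof (rule eq_matI)
      fix i j assume ij: "i < dim_row (kron A'' (1\<^sub>m d))" "j < dim_col (kron A'' (1\<^sub>m d))"
      then have i: "i < n*d" and j: "j < n*d" using A''c by auto
      have u: "i div d < n" "j div d < n" using i j less_mult_imp_div_less by blast+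
      have "(c \<cdot>\<^sub>m kron A B + kron A' (1\<^sub>m d)) $$ (i, j) = c * kron A B $$ (i,j) + kron A' (1\<^sub>m d) $$ (i,j)"
        using dims i j Ac A'c Bc by simp
      also have "\<dots> = c * (A $$ (i div d, j div d) * (c' * (1\<^sub>m d) $$ (i mod d, j mod d)))
          + A' $$ (i div d, j div d) * (1\<^sub>m d) $$ (i mod d, j mod d)"
        using i j Ac A'c Bc B' d by (simp add: kron_index)
      also have "\<dots> = (c*c'*A $$ (i div d, j div d) + A' $$ (i div d, j div d)) * (1\<^sub>m d) $$ (i mod d, j mod d)"
        by (simp add: algebra_simps)
      also have "\<dots> = A'' $$ (i div d, j div d) * (1\<^sub>m d) $$ (i mod d, j mod d)"
        using u Ac A'c by (simp add: A''_def)
      also have "\<dots> = kron A'' (1\<^sub>m d) $$ (i, j)"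
        using i j A''c by (simp add: kron_index)
      finally show "(c \<cdot>\<^sub>m kron A B + kron A' (1\<^sub>m d)) $$ (i, j) = kron A'' (1\<^sub>m d) $$ (i, j)" .
    qed (use dims A'c A''c in auto)
    ultimately show ?case using t A' \<open>A'' \<in> ghat n E\<close> by auto
  qed
  show "ncg_tensor n (ghat n E) d (cI d) \<subseteq> {kron A (1\<^sub>m d) | A. A \<in> ghat n E}"
  proof
    fix Y assume "Y \<in> ncg_tensor n (ghat n E) d (cI d)"
    then obtain L where L: "Y = foldr (+) (map (\<lambda>(c,A,B). c \<cdot>\<^sub>m kron A B) L) (0\<^sub>m (n*d) (n*d))"
      "\<forall>(c,A,B)\<in>set L. A \<in> ghat n E \<and> B \<in> cI d"
      unfolding ncg_tensor_def mem_Collect_eq by blast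
    obtain A' where "A' \<in> ghat n E" "Y = kron A' (1\<^sub>m d)" using main[OF L(2)] L(1) by blast
    then show "Y \<in> {kron A (1\<^sub>m d) | A. A \<in> ghat n E}" by blast
  qed
qed


definition off :: "(nat \<Rightarrow> nat) \<Rightarrow> nat \<Rightarrow> nat" where
  "off n d = so (\<lambda>d. n d * d) 1 d"

definition idx :: "(nat \<Rightarrow> nat) \<Rightarrow> (nat \<times> nat) \<times> nat \<Rightarrow> nat" where
  "idx n t = off n (fst (fst t)) + (snd (fst t) * fst (fst t) + snd t)"

definition DD :: "nat \<Rightarrow> (nat \<Rightarrow> nat) \<Rightarrow> ((nat \<times> nat) \<times> nat) set" where
  "DD r n = Sigma (vtx r n) (\<lambda>g. {..<fst g})"

lemma dim_off: "ncg_dim r n = off n (r+1)"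
  unfolding ncg_dim_def off_def so_def by (simp add: atLeastLessThanSuc_atLeastAtMost)

lemma vtx_Sigma: "vtx r n = Sigma {1..r} (\<lambda>d. {..<n d})"
  unfolding vtx_def by auto

lemma finite_vtx: "finite (vtx r n)" unfolding vtx_Sigma by auto

lemma finite_DD: "finite (DD r n)" unfolding DD_def using finite_vtx by auto

lemma vtx_D: "g \<in> vtx r n \<Longrightarrow> 1 \<le> fst g \<and> fst g \<le> r \<and> snd g < n (fst g)"
  unfolding vtx_def by auto

lemma off_Suc: "1 \<le> d \<Longrightarrow> off n (Suc d) = off n d + n d * d"
  unfolding off_def by (simp add: so_Suc)

lemma off_mono: "d \<le> d' \<Longrightarrow> off n d \<le> off n d'"
  unfolding off_def by (rule so_mono)

lemma idx_bound: "g \<in> vtx r n \<Longrightarrow> k < fst g \<Longrightarrow> off n (fst g) \<le> idx n (g,k) \<and> idx n (g,k) < off n (Suc (fst g))"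
proof -
  assume g: "g \<in> vtx r n" and k: "k < fst g"
  have "snd g * fst g + k < n (fst g) * fst g" using vtx_D[OF g] k by (intro lt_mult_aux) auto
  then show ?thesis using off_Suc[of "fst g" n] vtx_D[OF g] unfolding idx_def by auto
qed

lemma idx_lt: "g \<in> vtx r n \<Longrightarrow> k < fst g \<Longrightarrow> idx n (g,k) < ncg_dim r n"
proof -
  assume g: "g \<in> vtx r n" and k: "k < fst g"
  have "off n (Suc (fst g)) \<le> off n (r+1)" using vtx_D[OF g] by (intro off_mono) auto
  then show ?thesis using idx_bound[OF g k] dim_off[of r n] by linarith
qed

lemma idx_inj: "g \<in> vtx r n \<Longrightarrow> k < fst g \<Longrightarrow> g' \<in> vtx r n \<Longrightarrow> k' < fst g' \<Longrightarrow>
  idx n (g,k) = idx n (g',k') \<Longrightarrow> g = g' \<and> k = k'"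
proof -
  assume g: "g \<in> vtx r n" and k: "k < fst g" and g': "g' \<in> vtx r n" and k': "k' < fst g'"
    and eq: "idx n (g,k) = idx n (g',k')"
  have "\<not> fst g < fst g'"
  proof
    assume "fst g < fst g'"
    then have "off n (Suc (fst g)) \<le> off n (fst g')" by (intro off_mono) auto
    then show False using idx_bound[OF g k] idx_bound[OF g' k'] eq by linarith
  qed
  moreover have "\<not> fst g' < fst g"
  proof
    assume "fst g' < fst g"
    then have "off n (Suc (fst g')) \<le> off n (fst g)" by (intro off_mono) auto
    then show False using idx_bound[OF g k] idx_bound[OF g' k'] eq by linarith
  qed
  ultimately have d: "fst g = fst g'" by simp
  then have e: "snd g * fst g + k = snd g' * fst g + k'" using eq unfolding idx_def by simp
  have "(snd g * fst g + k) div fst g = snd g" "(snd g * fst g + k) mod fst g = k" using k by simp_all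
  moreover have "(snd g' * fst g + k') div fst g = snd g'" "(snd g' * fst g + k') mod fst g = k'" using k' d by simp_all
  ultimately have "snd g = snd g'" "k = k'" using e by metis+
  then show ?thesis using d by (simp add: prod_eq_iff)
qed

lemma idx_surj: "p < ncg_dim r n \<Longrightarrow> \<exists>g\<in>vtx r n. \<exists>k<fst g. p = idx n (g,k)"
proof -
  assume "p < ncg_dim r n"
  then have "p < so (\<lambda>d. n d * d) 1 (r+1)" unfolding dim_off off_def .
  then obtain d i where d: "d \<in> {1..<r+1}" and i: "i < n d * d" and p: "p = so (\<lambda>d. n d * d) 1 d + i"
    using decomp by blast
  have d0: "0 < d" using d by auto
  have x: "i div d < n d" using i less_mult_imp_div_less by blast
  have k: "i mod d < d" using d0 by simp
  have g: "(d, i div d) \<in> vtx r n" using d x unfolding vtx_def by auto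
  have "p = idx n ((d, i div d), i mod d)" unfolding idx_def off_def p by simp
  then show ?thesis using g k by force
qed

lemma idx_bij: "bij_betw (idx n) (DD r n) {..<ncg_dim r n}"
proof (rule bij_betw_imageI)
  show "inj_on (idx n) (DD r n)"
    unfolding DD_def by (intro inj_onI) (auto dest: idx_inj)
  show "idx n ` DD r n = {..<ncg_dim r n}"
  proof
    show "idx n ` DD r n \<subseteq> {..<ncg_dim r n}" unfolding DD_def by (auto intro: idx_lt)
    show "{..<ncg_dim r n} \<subseteq> idx n ` DD r n"
    proof
      fix p assume "p \<in> {..<ncg_dim r n}"
      then obtain g k where "g \<in> vtx r n" "k < fst g" "p = idx n (g,k)" using idx_surj by blast
      then show "p \<in> idx n ` DD r n" unfolding DD_def by force
    qed
  qed
qed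

lemma sum_reindex: "(\<Sum>p<ncg_dim r n. f p) = (\<Sum>g\<in>vtx r n. \<Sum>k<fst g. f (idx n (g,k)))"
proof -
  have "(\<Sum>p<ncg_dim r n. f p) = (\<Sum>t\<in>DD r n. f (idx n t))"
    using sum.reindex_bij_betw[OF idx_bij, of f] by simp
  also have "\<dots> = (\<Sum>g\<in>vtx r n. \<Sum>k<fst g. f (idx n (g,k)))"
    unfolding DD_def using finite_vtx by (subst sum.Sigma) auto
  finally show ?thesis .
qed

lemma bdk:
  assumes A: "\<forall>d\<in>{1..r}. A d \<in> carrier_mat (n d) (n d)"
  defines "Bk \<equiv> block_diag (map (\<lambda>d. kron (A d) (1\<^sub>m d)) [1..<r+1])"
  shows "Bk \<in> carrier_mat (ncg_dim r n) (ncg_dim r n)"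
    and "g \<in> vtx r n \<Longrightarrow> k < fst g \<Longrightarrow> g' \<in> vtx r n \<Longrightarrow> k' < fst g' \<Longrightarrow>
      Bk $$ (idx n (g,k), idx n (g',k')) = (if fst g = fst g' \<and> k = k' then A (fst g) $$ (snd g, snd g') else 0)"
proof -
  have c: "\<forall>d\<in>{1..<r+1}. kron (A d) (1\<^sub>m d) \<in> carrier_mat (n d * d) (n d * d)"
    using A kron_I_carrier by auto
  note B = bd[OF c, folded Bk_def]
  show "Bk \<in> carrier_mat (ncg_dim r n) (ncg_dim r n)" using B unfolding dim_off off_def by blast
  assume g: "g \<in> vtx r n" and k: "k < fst g" and g': "g' \<in> vtx r n" and k': "k' < fst g'"
  have i: "snd g * fst g + k < n (fst g) * fst g" using vtx_D[OF g] k by (intro lt_mult_aux) auto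
  have j: "snd g' * fst g' + k' < n (fst g') * fst g'" using vtx_D[OF g'] k' by (intro lt_mult_aux) auto
  have d: "fst g \<in> {1..<r+1}" "fst g' \<in> {1..<r+1}" using vtx_D[OF g] vtx_D[OF g'] by auto
  have "Bk $$ (idx n (g,k), idx n (g',k')) = (if fst g = fst g' then kron (A (fst g)) (1\<^sub>m (fst g)) $$ (snd g * fst g + k, snd g' * fst g' + k') else 0)"
    using B d i j unfolding idx_def off_def fst_conv snd_conv by blast
  also have "\<dots> = (if fst g = fst g' \<and> k = k' then A (fst g) $$ (snd g, snd g') else 0)"
  proof (cases "fst g = fst g'")
    case True
    have Ac: "A (fst g) \<in> carrier_mat (n (fst g)) (n (fst g))" using A vtx_D[OF g] by auto
    show ?thesis using True kron_I_index[OF Ac, of "snd g" "snd g'" k "fst g" k'] vtx_D[OF g] vtx_D[OF g'] k k' by simp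
  qed simp
  finally show "Bk $$ (idx n (g,k), idx n (g',k')) = (if fst g = fst g' \<and> k = k' then A (fst g) $$ (snd g, snd g') else 0)" .
qed


definition Sform :: "nat \<Rightarrow> (nat \<Rightarrow> nat) \<Rightarrow> (nat \<Rightarrow> nat \<Rightarrow> nat \<Rightarrow> bool) \<Rightarrow> complex mat \<Rightarrow> bool" where
  "Sform r n E X \<longleftrightarrow> (\<exists>a. \<forall>g\<in>vtx r n. \<forall>k<fst g. \<forall>g'\<in>vtx r n. \<forall>k'<fst g'.
      X $$ (idx n (g,k), idx n (g',k')) = (if k = k' \<and> simeq E g g' then a g g' else 0))"

lemma S_char: "X \<in> ncg_S r n E \<longleftrightarrow> X \<in> carrier_mat (ncg_dim r n) (ncg_dim r n) \<and> Sform r n E X"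
proof
  assume "X \<in> ncg_S r n E"
  then obtain M where X: "X = block_diag (map M [1..<r+1])"
    and M: "\<forall>d\<in>{1..r}. M d \<in> ncg_tensor (n d) (ghat (n d) (E d)) d (cI d)"
    unfolding ncg_S_def ncg_dsum_def by blast
  have "\<forall>d\<in>{1..r}. \<exists>A. A \<in> ghat (n d) (E d) \<and> M d = kron A (1\<^sub>m d)"
  proof
    fix d assume d: "d \<in> {1..r}"
    then have "M d \<in> {kron A (1\<^sub>m d) | A. A \<in> ghat (n d) (E d)}"
      using M tensor_char[of d "n d" "E d"] by auto
    then show "\<exists>A. A \<in> ghat (n d) (E d) \<and> M d = kron A (1\<^sub>m d)" by blast
  qed
  then obtain A where A: "\<forall>d\<in>{1..r}. A d \<in> ghat (n d) (E d) \<and> M d = kron (A d) (1\<^sub>m d)"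
    by metis
  have Ac: "\<forall>d\<in>{1..r}. A d \<in> carrier_mat (n d) (n d)" using A unfolding ghat_def by blast
  have mm: "map M [1..<r+1] = map (\<lambda>d. kron (A d) (1\<^sub>m d)) [1..<r+1]"
  proof (rule map_cong[OF refl])
    fix d assume "d \<in> set [1..<r+1]"
    then have "d \<in> {1..r}" by (simp only: set_upt) auto
    then show "M d = kron (A d) (1\<^sub>m d)" using A by blast
  qed
  have X': "X = block_diag (map (\<lambda>d. kron (A d) (1\<^sub>m d)) [1..<r+1])" by (simp only: X mm)
  note B = bdk[OF Ac, folded X']
  show "X \<in> carrier_mat (ncg_dim r n) (ncg_dim r n) \<and> Sform r n E X"
  proof
    show "X \<in> carrier_mat (ncg_dim r n) (ncg_dim r n)" by (rule B(1))
    show "Sform r n E X" unfolding Sform_def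
    proof (intro exI[of _ "\<lambda>g g'. A (fst g) $$ (snd g, snd g')"] ballI allI impI)
      fix g k g' k' assume g: "g \<in> vtx r n" and k: "k < fst g" and g': "g' \<in> vtx r n" and k': "k' < fst g'"
      have "X $$ (idx n (g,k), idx n (g',k')) = (if fst g = fst g' \<and> k = k' then A (fst g) $$ (snd g, snd g') else 0)"
        by (rule B(2)[OF g k g' k'])
      also have "\<dots> = (if k = k' \<and> simeq E g g' then A (fst g) $$ (snd g, snd g') else 0)"
      proof (cases "fst g = fst g' \<and> k = k' \<and> \<not> simeq E g g'")
        case True
        then have "snd g \<noteq> snd g' \<and> \<not> E (fst g) (snd g) (snd g')" unfolding simeq_def by auto
        moreover have "A (fst g) \<in> ghat (n (fst g)) (E (fst g))" using A vtx_D[OF g] by auto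
        ultimately have "A (fst g) $$ (snd g, snd g') = 0"
          using vtx_D[OF g] vtx_D[OF g'] True unfolding ghat_def by auto
        then show ?thesis using True by simp
      next
        case False
        then show ?thesis unfolding simeq_def by auto
      qed
      finally show "X $$ (idx n (g,k), idx n (g',k')) = (if k = k' \<and> simeq E g g' then A (fst g) $$ (snd g, snd g') else 0)" .
    qed
  qed
next
  assume "X \<in> carrier_mat (ncg_dim r n) (ncg_dim r n) \<and> Sform r n E X"
  then have Xc: "X \<in> carrier_mat (ncg_dim r n) (ncg_dim r n)" and "Sform r n E X" by auto
  then obtain a where a: "\<forall>g\<in>vtx r n. \<forall>k<fst g. \<forall>g'\<in>vtx r n. \<forall>k'<fst g'.
      X $$ (idx n (g,k), idx n (g',k')) = (if k = k' \<and> simeq E g g' then a g g' else 0)"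
    unfolding Sform_def by blast
  define A where "A d = mat (n d) (n d) (\<lambda>(x,x'). if simeq E (d,x) (d,x') then a (d,x) (d,x') else 0)" for d
  have Ag: "A d \<in> ghat (n d) (E d)" for d
    unfolding ghat_def A_def simeq_def by auto
  have Ac: "\<forall>d\<in>{1..r}. A d \<in> carrier_mat (n d) (n d)" unfolding A_def by auto
  note B = bdk[OF Ac]
  have XB: "X = block_diag (map (\<lambda>d. kron (A d) (1\<^sub>m d)) [1..<r+1])"
  proof (rule eq_matI)
    fix p q assume "p < dim_row (block_diag (map (\<lambda>d. kron (A d) (1\<^sub>m d)) [1..<r+1]))"
      "q < dim_col (block_diag (map (\<lambda>d. kron (A d) (1\<^sub>m d)) [1..<r+1]))"
    then have "p < ncg_dim r n" "q < ncg_dim r n" using B(1) by auto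
    then obtain g k g' k' where g: "g \<in> vtx r n" "k < fst g" "p = idx n (g,k)"
      and g': "g' \<in> vtx r n" "k' < fst g'" "q = idx n (g',k')" using idx_surj by metis
    have "block_diag (map (\<lambda>d. kron (A d) (1\<^sub>m d)) [1..<r+1]) $$ (p,q) =
      (if fst g = fst g' \<and> k = k' then A (fst g) $$ (snd g, snd g') else 0)"
      unfolding g(3) g'(3) by (rule B(2)[OF g(1,2) g'(1,2)])
    also have "\<dots> = (if k = k' \<and> simeq E g g' then a g g' else 0)"
      using vtx_D[OF g(1)] vtx_D[OF g'(1)] by (cases g; cases g'; auto simp: A_def simeq_def)
    also have "\<dots> = X $$ (p,q)" using a g g' by simp
    finally show "X $$ (p,q) = block_diag (map (\<lambda>d. kron (A d) (1\<^sub>m d)) [1..<r+1]) $$ (p,q)" by simp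
  qed (use Xc B(1) in auto)
  have "\<forall>d\<in>{1..r}. kron (A d) (1\<^sub>m d) \<in> ncg_tensor (n d) (ghat (n d) (E d)) d (cI d)"
  proof
    fix d assume "d \<in> {1..r}"
    then have "0 < d" by auto
    then show "kron (A d) (1\<^sub>m d) \<in> ncg_tensor (n d) (ghat (n d) (E d)) d (cI d)"
      using tensor_char[of d "n d" "E d"] Ag by blast
  qed
  then show "X \<in> ncg_S r n E" unfolding ncg_S_def ncg_dsum_def XB by blast
qed


definition inv_idx :: "nat \<Rightarrow> (nat \<Rightarrow> nat) \<Rightarrow> nat \<Rightarrow> (nat \<times> nat) \<times> nat" where
  "inv_idx r n = the_inv_into (DD r n) (idx n)"

lemma inv_idx: "p < ncg_dim r n \<Longrightarrow> inv_idx r n p \<in> DD r n \<and> idx n (inv_idx r n p) = p"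
  unfolding inv_idx_def using idx_bij[of n r]
  by (auto intro: the_inv_into_into f_the_inv_into_f_bij_betw simp: bij_betw_def)

lemma inv_idx_idx: "g \<in> vtx r n \<Longrightarrow> k < fst g \<Longrightarrow> inv_idx r n (idx n (g,k)) = (g,k)"
  unfolding inv_idx_def using idx_bij[of n r]
  by (intro the_inv_into_f_f) (auto simp: bij_betw_def DD_def)

definition bmat :: "nat \<Rightarrow> (nat \<Rightarrow> nat) \<Rightarrow> (nat \<Rightarrow> nat) \<Rightarrow> ((nat \<times> nat) \<times> nat \<Rightarrow> (nat \<times> nat) \<times> nat \<Rightarrow> complex) \<Rightarrow> complex mat" where
  "bmat r n1 n2 F = mat (ncg_dim r n1) (ncg_dim r n2) (\<lambda>(p,q). F (inv_idx r n1 p) (inv_idx r n2 q))"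

lemma bmat_carrier: "bmat r n1 n2 F \<in> carrier_mat (ncg_dim r n1) (ncg_dim r n2)"
  unfolding bmat_def by simp

lemma bmat_idx: "g \<in> vtx r n1 \<Longrightarrow> k < fst g \<Longrightarrow> h \<in> vtx r n2 \<Longrightarrow> l < fst h \<Longrightarrow>
  bmat r n1 n2 F $$ (idx n1 (g,k), idx n2 (h,l)) = F (g,k) (h,l)"
  unfolding bmat_def using idx_lt[of g r n1 k] idx_lt[of h r n2 l]
  by (simp add: inv_idx_idx)

lemma double_idx:
  assumes "A \<in> carrier_mat (ncg_dim r n) m1" "B \<in> carrier_mat (ncg_dim r n) m2" "i < m1" "j < m2"
  shows "(mat_adjoint A * B) $$ (i,j) = (\<Sum>g\<in>vtx r n. \<Sum>k<fst g. cnj (A $$ (idx n (g,k), i)) * B $$ (idx n (g,k), j))"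
  unfolding double_entry[OF assms] by (rule sum_reindex)

lemma triple_idx:
  assumes "A \<in> carrier_mat (ncg_dim r n) m1" "X \<in> carrier_mat (ncg_dim r n) (ncg_dim r n)"
    "B \<in> carrier_mat (ncg_dim r n) m2" "i < m1" "j < m2"
  shows "(mat_adjoint A * X * B) $$ (i,j) = (\<Sum>g'\<in>vtx r n. \<Sum>k'<fst g'. \<Sum>g\<in>vtx r n. \<Sum>k<fst g.
     cnj (A $$ (idx n (g,k), i)) * X $$ (idx n (g,k), idx n (g',k')) * B $$ (idx n (g',k'), j))"
  unfolding triple_entry[OF assms] by (simp only: sum_reindex)

lemma collapse:
  assumes "g0 \<in> vtx r n"
  shows "(\<Sum>g\<in>vtx r n. \<Sum>k<fst g. if g = g0 then F g k else 0) = (\<Sum>k<fst g0. F g0 k)"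
proof -
  have "(\<Sum>g\<in>vtx r n. \<Sum>k<fst g. if g = g0 then F g k else 0) = (\<Sum>g\<in>vtx r n. if g = g0 then (\<Sum>k<fst g. F g k) else 0)"
    by (rule sum.cong) auto
  also have "\<dots> = (\<Sum>k<fst g0. F g0 k)" using assms finite_vtx[of r n] by (simp add: sum.delta)
  finally show ?thesis .
qed

lemma sum_list_zero: "(\<forall>x\<in>set xs. f x = (0::'a::comm_monoid_add)) \<Longrightarrow> sum_list (map f xs) = 0"
  by (induction xs) auto


lemma sum_if_out: "(\<Sum>k\<in>A. if c then f k else 0) = (if c then (\<Sum>k\<in>A. f k) else (0::'a::comm_monoid_add))"
  by simp

lemma adj_mult_entry_small:
  assumes "A \<in> carrier_mat m n1" "B \<in> carrier_mat m n2" "i < n1" "j < n2"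
  shows "(mat_adjoint A * B) $$ (i,j) = (\<Sum>k<m. cnj (A $$ (k,i)) * B $$ (k,j))"
  by (rule double_entry[OF assms])

lemma dir21:
  fixes \<phi> :: "nat \<times> nat \<Rightarrow> nat \<times> nat" and U :: "nat \<times> nat \<Rightarrow> complex mat"
  assumes phi: "\<forall>h\<in>vtx r nH. \<phi> h \<in> vtx r nG"
   and Uc: "\<forall>h\<in>vtx r nH. U h \<in> carrier_mat (piv (\<phi> h)) (piv h) \<and> mat_adjoint (U h) * U h = 1\<^sub>m (piv h)"
   and C: "\<forall>h\<in>vtx r nH. \<forall>h'\<in>vtx r nH.
          (\<not> simeq EH h h' \<longrightarrow>
             \<not> simeq EG (\<phi> h) (\<phi> h') \<or> mat_adjoint (U h) * U h' = 0\<^sub>m (piv h) (piv h')) \<and>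
          (simeq EH h h' \<and> simeq EG (\<phi> h) (\<phi> h') \<longrightarrow>
             (\<exists>c :: complex. mat_adjoint (U h) * U h' = c \<cdot>\<^sub>m 1\<^sub>m (piv h)))"
  shows "cohom (ncg_S r nH EH) (ncg_dim r nH) (ncg_S r nG EG) (ncg_dim r nG)"
proof -
  define Eh where "Eh h = bmat r nG nH (\<lambda>(g,k) (h',l). if h' = h \<and> g = \<phi> h then U h $$ (k,l) else 0)" for h
  have Ec: "Eh h \<in> carrier_mat (ncg_dim r nG) (ncg_dim r nH)" for h
    unfolding Eh_def by (rule bmat_carrier)
  have Ei: "Eh h $$ (idx nG (g,k), idx nH (h',l)) = (if h' = h \<and> g = \<phi> h then U h $$ (k,l) else 0)"
    if "g \<in> vtx r nG" "k < fst g" "h' \<in> vtx r nH" "l < fst h'" for h g k h' l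
    unfolding Eh_def using that by (simp add: bmat_idx)
  have Uc': "U h \<in> carrier_mat (fst (\<phi> h)) (fst h)" if "h \<in> vtx r nH" for h
    using Uc that unfolding piv_def by auto
  have UU: "mat_adjoint (U h) * U h = 1\<^sub>m (fst h)" if "h \<in> vtx r nH" for h
    using Uc that unfolding piv_def by auto
  have EE: "(mat_adjoint (Eh h) * Eh h) $$ (idx nH (h1,l1), idx nH (h2,l2)) = (if h1 = h \<and> h2 = h \<and> l1 = l2 then 1 else 0)"
    if h: "h \<in> vtx r nH" and h1: "h1 \<in> vtx r nH" "l1 < fst h1" and h2: "h2 \<in> vtx r nH" "l2 < fst h2" for h h1 l1 h2 l2
  proof -
    have "(mat_adjoint (Eh h) * Eh h) $$ (idx nH (h1,l1), idx nH (h2,l2)) =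
      (\<Sum>g\<in>vtx r nG. \<Sum>k<fst g. cnj (Eh h $$ (idx nG (g,k), idx nH (h1,l1))) * Eh h $$ (idx nG (g,k), idx nH (h2,l2)))"
      by (rule double_idx[OF Ec Ec idx_lt[OF h1] idx_lt[OF h2]])
    also have "\<dots> = (\<Sum>g\<in>vtx r nG. \<Sum>k<fst g. if g = \<phi> h then (if h1 = h \<and> h2 = h then cnj (U h $$ (k,l1)) * U h $$ (k,l2) else 0) else 0)"
      by (intro sum.cong refl) (auto simp: Ei h1 h2)
    also have "\<dots> = (\<Sum>k<fst (\<phi> h). if h1 = h \<and> h2 = h then cnj (U h $$ (k,l1)) * U h $$ (k,l2) else 0)"
      by (rule collapse) (use phi h in auto)
    also have "\<dots> = (if h1 = h \<and> h2 = h then (mat_adjoint (U h) * U h) $$ (l1,l2) else 0)"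
    proof (cases "h1 = h \<and> h2 = h")
      case True
      then show ?thesis using double_entry[OF Uc'[OF h] Uc'[OF h], of l1 l2] h1 h2 by simp
    qed (simp only: sum_if_out, auto)
    also have "\<dots> = (if h1 = h \<and> h2 = h \<and> l1 = l2 then 1 else 0)"
      using UU[OF h] h1 h2 by auto
    finally show ?thesis .
  qed
  obtain hs where hs: "distinct hs" "set hs = vtx r nH"
    using finite_distinct_list[OF finite_vtx[of r nH]] by metis
  define Es where "Es = map Eh hs"
  have carr: "\<forall>x\<in>set Es. mat_adjoint x * x \<in> carrier_mat (ncg_dim r nH) (ncg_dim r nH)"
  proof
    fix x assume "x \<in> set Es"
    then obtain h where "x = Eh h" unfolding Es_def by auto
    then show "mat_adjoint x * x \<in> carrier_mat (ncg_dim r nH) (ncg_dim r nH)"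
      using mult_carrier_mat[OF adj_carrier[OF Ec] Ec] by simp
  qed
  note fs = foldr_sum[OF carr]
  have sumI: "foldr (+) (map (\<lambda>E. mat_adjoint E * E) Es) (0\<^sub>m (ncg_dim r nH) (ncg_dim r nH)) = 1\<^sub>m (ncg_dim r nH)"
  proof (rule eq_matI)
    fix p q assume "p < dim_row (1\<^sub>m (ncg_dim r nH))" "q < dim_col (1\<^sub>m (ncg_dim r nH))"
    then have pq: "p < ncg_dim r nH" "q < ncg_dim r nH" by auto
    then obtain h1 l1 h2 l2 where h1: "h1 \<in> vtx r nH" "l1 < fst h1" "p = idx nH (h1,l1)"
      and h2: "h2 \<in> vtx r nH" "l2 < fst h2" "q = idx nH (h2,l2)" using idx_surj by metis
    have "foldr (+) (map (\<lambda>E. mat_adjoint E * E) Es) (0\<^sub>m (ncg_dim r nH) (ncg_dim r nH)) $$ (p,q)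
        = (\<Sum>E\<leftarrow>Es. (mat_adjoint E * E) $$ (p,q))" using fs pq by blast
    also have "\<dots> = (\<Sum>h\<in>vtx r nH. (mat_adjoint (Eh h) * Eh h) $$ (p,q))"
      unfolding Es_def map_map using hs by (simp add: sum_list_distinct_conv_sum_set comp_def)
    also have "\<dots> = (\<Sum>h\<in>vtx r nH. if h = h1 then (if h2 = h1 \<and> l1 = l2 then 1 else 0) else 0)"
      unfolding h1(3) h2(3) by (intro sum.cong refl) (auto simp: EE h1 h2)
    also have "\<dots> = (if h2 = h1 \<and> l1 = l2 then 1 else 0)" using h1 finite_vtx by (simp add: sum.delta)
    also have "\<dots> = 1\<^sub>m (ncg_dim r nH) $$ (p,q)"
      using pq idx_inj[OF h1(1,2) h2(1,2)] h1(3) h2(3) by auto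
    finally show "foldr (+) (map (\<lambda>E. mat_adjoint E * E) Es) (0\<^sub>m (ncg_dim r nH) (ncg_dim r nH)) $$ (p,q) = 1\<^sub>m (ncg_dim r nH) $$ (p,q)" .
  qed (use fs in auto)
  have clos: "mat_adjoint (Eh h) * X * Eh h' \<in> ncg_S r nH EH"
    if h: "h \<in> vtx r nH" and h': "h' \<in> vtx r nH" and X: "X \<in> ncg_S r nG EG" for h h' X
  proof -
    have Xc: "X \<in> carrier_mat (ncg_dim r nG) (ncg_dim r nG)" and "Sform r nG EG X" using X S_char by auto
    then obtain aX where aX: "\<forall>g\<in>vtx r nG. \<forall>k<fst g. \<forall>g'\<in>vtx r nG. \<forall>k'<fst g'.
      X $$ (idx nG (g,k), idx nG (g',k')) = (if k = k' \<and> simeq EG g g' then aX g g' else 0)"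
      unfolding Sform_def by blast
    have ph: "\<phi> h \<in> vtx r nG" "\<phi> h' \<in> vtx r nG" using phi h h' by auto
    have Mform: "(mat_adjoint (Eh h) * X * Eh h') $$ (idx nH (h1,l1), idx nH (h2,l2)) =
       (if h1 = h \<and> h2 = h' \<and> simeq EG (\<phi> h) (\<phi> h') then aX (\<phi> h) (\<phi> h') * (mat_adjoint (U h) * U h') $$ (l1,l2) else 0)"
      if h1: "h1 \<in> vtx r nH" "l1 < fst h1" and h2: "h2 \<in> vtx r nH" "l2 < fst h2" for h1 l1 h2 l2
    proof -
      define Q where "Q g k g' k' = (if h1 = h \<and> h2 = h' then cnj (U h $$ (k,l1)) * (if k = k' \<and> simeq EG g g' then aX g g' else 0) * U h' $$ (k',l2) else 0)" for g k g' k'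
      have "(mat_adjoint (Eh h) * X * Eh h') $$ (idx nH (h1,l1), idx nH (h2,l2)) =
        (\<Sum>g'\<in>vtx r nG. \<Sum>k'<fst g'. \<Sum>g\<in>vtx r nG. \<Sum>k<fst g.
          cnj (Eh h $$ (idx nG (g,k), idx nH (h1,l1))) * X $$ (idx nG (g,k), idx nG (g',k')) * Eh h' $$ (idx nG (g',k'), idx nH (h2,l2)))"
        by (rule triple_idx[OF Ec Xc Ec idx_lt[OF h1] idx_lt[OF h2]])
      also have "\<dots> = (\<Sum>g'\<in>vtx r nG. \<Sum>k'<fst g'. \<Sum>g\<in>vtx r nG. \<Sum>k<fst g.
          if g = \<phi> h then (if g' = \<phi> h' then Q g k g' k' else 0) else 0)"
        by (intro sum.cong refl) (auto simp: Ei h1 h2 aX Q_def)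
      also have "\<dots> = (\<Sum>g'\<in>vtx r nG. \<Sum>k'<fst g'. \<Sum>k<fst (\<phi> h). if g' = \<phi> h' then Q (\<phi> h) k g' k' else 0)"
        by (intro sum.cong refl collapse ph)
      also have "\<dots> = (\<Sum>g'\<in>vtx r nG. \<Sum>k'<fst g'. if g' = \<phi> h' then (\<Sum>k<fst (\<phi> h). Q (\<phi> h) k g' k') else 0)"
        by (simp only: sum_if_out)
      also have "\<dots> = (\<Sum>k'<fst (\<phi> h'). \<Sum>k<fst (\<phi> h). Q (\<phi> h) k (\<phi> h') k')"
        by (rule collapse[OF ph(2)])
      also have "\<dots> = (if h1 = h \<and> h2 = h' \<and> simeq EG (\<phi> h) (\<phi> h') then aX (\<phi> h) (\<phi> h') * (mat_adjoint (U h) * U h') $$ (l1,l2) else 0)"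
      proof (cases "h1 = h \<and> h2 = h' \<and> simeq EG (\<phi> h) (\<phi> h')")
        case True
        then have f: "fst (\<phi> h) = fst (\<phi> h')" unfolding simeq_def by auto
        have "(\<Sum>k'<fst (\<phi> h'). \<Sum>k<fst (\<phi> h). Q (\<phi> h) k (\<phi> h') k') =
              (\<Sum>k'<fst (\<phi> h'). \<Sum>k<fst (\<phi> h). if k = k' then cnj (U h $$ (k,l1)) * aX (\<phi> h) (\<phi> h') * U h' $$ (k',l2) else 0)"
          using True by (intro sum.cong refl) (auto simp: Q_def)
        also have "\<dots> = (\<Sum>k'<fst (\<phi> h'). cnj (U h $$ (k',l1)) * aX (\<phi> h) (\<phi> h') * U h' $$ (k',l2))"
          using f by (intro sum.cong refl) (auto simp: sum.delta)
        also have "\<dots> = aX (\<phi> h) (\<phi> h') * (\<Sum>k'<fst (\<phi> h'). cnj (U h $$ (k',l1)) * U h' $$ (k',l2))"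
          by (simp add: sum_distrib_left algebra_simps)
        also have "\<dots> = aX (\<phi> h) (\<phi> h') * (mat_adjoint (U h) * U h') $$ (l1,l2)"
          using double_entry[of "U h" "fst (\<phi> h')" "fst h" "U h'" "fst h'" l1 l2] Uc'[OF h] Uc'[OF h'] f True h1 h2 by simp
        finally show ?thesis using True by simp
      next
        case False
        then have "Q (\<phi> h) k (\<phi> h') k' = 0" for k k' unfolding Q_def by auto
        then show ?thesis using False by (simp only: if_False, simp)
      qed
      finally show ?thesis .
    qed
    define cc where "cc = (SOME c. mat_adjoint (U h) * U h' = c \<cdot>\<^sub>m 1\<^sub>m (fst h))"
    have "Sform r nH EH (mat_adjoint (Eh h) * X * Eh h')"
      unfolding Sform_def
    proof (intro exI[of _ "\<lambda>h1 h2. if h1 = h \<and> h2 = h' \<and> simeq EG (\<phi> h) (\<phi> h') \<and> simeq EH h h' then aX (\<phi> h) (\<phi> h') * cc else 0"] ballI allI impI)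
      fix h1 l1 h2 l2 assume h1: "h1 \<in> vtx r nH" "l1 < fst h1" and h2: "h2 \<in> vtx r nH" "l2 < fst h2"
      show "(mat_adjoint (Eh h) * X * Eh h') $$ (idx nH (h1,l1), idx nH (h2,l2)) =
        (if l1 = l2 \<and> simeq EH h1 h2 then (if h1 = h \<and> h2 = h' \<and> simeq EG (\<phi> h) (\<phi> h') \<and> simeq EH h h' then aX (\<phi> h) (\<phi> h') * cc else 0) else 0)"
      proof (cases "h1 = h \<and> h2 = h' \<and> simeq EG (\<phi> h) (\<phi> h')")
        case True
        show ?thesis
        proof (cases "simeq EH h h'")
          case sH: True
          have "\<exists>c. mat_adjoint (U h) * U h' = c \<cdot>\<^sub>m 1\<^sub>m (fst h)" using C h h' True sH unfolding piv_def by blast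
          then have ccd: "mat_adjoint (U h) * U h' = cc \<cdot>\<^sub>m 1\<^sub>m (fst h)" unfolding cc_def by (rule someI_ex)
          have "(mat_adjoint (U h) * U h') $$ (l1,l2) = (if l1 = l2 then cc else 0)"
            unfolding ccd using True h1 h2 sH unfolding simeq_def by auto
          then show ?thesis using Mform[OF h1 h2] True sH by auto
        next
          case sH: False
          have "mat_adjoint (U h) * U h' = 0\<^sub>m (fst h) (fst h')" using C h h' True sH unfolding piv_def by blast
          then have "(mat_adjoint (U h) * U h') $$ (l1,l2) = 0" using True h1 h2 by auto
          then show ?thesis using Mform[OF h1 h2] True sH by auto
        qed
      next
        case False
        then show ?thesis using Mform[OF h1 h2] by auto
      qed
    qed
    moreover have "mat_adjoint (Eh h) * X * Eh h' \<in> carrier_mat (ncg_dim r nH) (ncg_dim r nH)"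
      using mult_carrier_mat[OF mult_carrier_mat[OF adj_carrier[OF Ec] Xc] Ec] .
    ultimately show ?thesis using S_char by blast
  qed
  show ?thesis unfolding cohom_def
  proof (intro exI[of _ Es] conjI ballI)
    show "E \<in> carrier_mat (ncg_dim r nG) (ncg_dim r nH)" if "E \<in> set Es" for E using Ec that unfolding Es_def by auto
    show "foldr (+) (map (\<lambda>E. mat_adjoint E * E) Es) (0\<^sub>m (ncg_dim r nH) (ncg_dim r nH)) = 1\<^sub>m (ncg_dim r nH)" by (rule sumI)
    fix Ei Ej A assume "Ei \<in> set Es" "Ej \<in> set Es" "A \<in> ncg_S r nG EG"
    then show "mat_adjoint Ei * A * Ej \<in> ncg_S r nH EH" using clos hs unfolding Es_def by auto
  qed
qed


lemma cnj_mult_self: "cnj z * z = complex_of_real ((cmod z)^2)"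
  by (subst complex_norm_square) (rule mult.commute)

lemma dir12:
  assumes "cohom (ncg_S r nH EH) (ncg_dim r nH) (ncg_S r nG EG) (ncg_dim r nG)"
  shows "\<exists>(\<phi> :: nat \<times> nat \<Rightarrow> nat \<times> nat) (U :: nat \<times> nat \<Rightarrow> complex mat).
       (\<forall>h\<in>vtx r nH. \<phi> h \<in> vtx r nG) \<and>
       (\<forall>h\<in>vtx r nH. U h \<in> carrier_mat (piv (\<phi> h)) (piv h) \<and>
                        mat_adjoint (U h) * U h = 1\<^sub>m (piv h)) \<and>
       (\<forall>h\<in>vtx r nH. \<forall>h'\<in>vtx r nH.
          (\<not> simeq EH h h' \<longrightarrow>
             \<not> simeq EG (\<phi> h) (\<phi> h') \<or> mat_adjoint (U h) * U h' = 0\<^sub>m (piv h) (piv h')) \<and>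
          (simeq EH h h' \<and> simeq EG (\<phi> h) (\<phi> h') \<longrightarrow>
             (\<exists>c :: complex. mat_adjoint (U h) * U h' = c \<cdot>\<^sub>m 1\<^sub>m (piv h))))"
proof -
  obtain Es where Ec: "\<forall>E\<in>set Es. E \<in> carrier_mat (ncg_dim r nG) (ncg_dim r nH)"
    and sumI: "foldr (+) (map (\<lambda>E. mat_adjoint E * E) Es) (0\<^sub>m (ncg_dim r nH) (ncg_dim r nH)) = 1\<^sub>m (ncg_dim r nH)"
    and clos: "\<forall>Ei\<in>set Es. \<forall>Ej\<in>set Es. \<forall>A\<in>ncg_S r nG EG. mat_adjoint Ei * A * Ej \<in> ncg_S r nH EH"
    using assms unfolding cohom_def by blast
  have carr: "\<forall>x\<in>set Es. mat_adjoint x * x \<in> carrier_mat (ncg_dim r nH) (ncg_dim r nH)"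
  proof
    fix x assume "x \<in> set Es"
    then have "x \<in> carrier_mat (ncg_dim r nG) (ncg_dim r nH)" using Ec by blast
    then show "mat_adjoint x * x \<in> carrier_mat (ncg_dim r nH) (ncg_dim r nH)"
      using mult_carrier_mat[OF adj_carrier] by blast
  qed
  note fs = foldr_sum[OF carr]
  have ex: "\<exists>E\<in>set Es. \<exists>g\<in>vtx r nG. \<exists>k<fst g. E $$ (idx nG (g,k), idx nH (h,0)) \<noteq> 0"
    if h: "h \<in> vtx r nH" for h
  proof (rule ccontr)
    assume nz: "\<not> (\<exists>E\<in>set Es. \<exists>g\<in>vtx r nG. \<exists>k<fst g. E $$ (idx nG (g,k), idx nH (h,0)) \<noteq> 0)"
    have h0: "0 < fst h" using vtx_D[OF h] by auto
    define p0 where "p0 = idx nH (h,0)"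
    have p0: "p0 < ncg_dim r nH" unfolding p0_def by (rule idx_lt[OF h h0])
    have "\<forall>E\<in>set Es. (mat_adjoint E * E) $$ (p0, p0) = 0"
    proof
      fix E assume E: "E \<in> set Es"
      have "(mat_adjoint E * E) $$ (p0,p0) = (\<Sum>g\<in>vtx r nG. \<Sum>k<fst g. cnj (E $$ (idx nG (g,k), p0)) * E $$ (idx nG (g,k), p0))"
        using Ec E p0 by (intro double_idx) auto
      also have "\<dots> = 0" using nz E unfolding p0_def by (intro sum.neutral ballI) auto
      finally show "(mat_adjoint E * E) $$ (p0,p0) = 0" .
    qed
    then have "(\<Sum>E\<leftarrow>Es. (mat_adjoint E * E) $$ (p0,p0)) = 0" by (rule sum_list_zero)
    moreover have "(\<Sum>E\<leftarrow>Es. (mat_adjoint E * E) $$ (p0,p0)) = 1"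
      using fs p0 sumI by (metis index_one_mat(1))
    ultimately show False by simp
  qed
  have "\<forall>h\<in>vtx r nH. \<exists>p. fst p \<in> set Es \<and> snd p \<in> vtx r nG \<and> (\<exists>k<fst (snd p). fst p $$ (idx nG (snd p,k), idx nH (h,0)) \<noteq> 0)"
  proof
    fix h assume "h \<in> vtx r nH"
    from ex[OF this] obtain E g k where "E \<in> set Es" "g \<in> vtx r nG" "k < fst g" "E $$ (idx nG (g,k), idx nH (h,0)) \<noteq> 0"
      by blast
    then show "\<exists>p. fst p \<in> set Es \<and> snd p \<in> vtx r nG \<and> (\<exists>k<fst (snd p). fst p $$ (idx nG (snd p,k), idx nH (h,0)) \<noteq> 0)"
      by (intro exI[of _ "(E,g)"]) auto
  qed
  from bchoice[OF this] obtain f where f: "\<forall>h\<in>vtx r nH. fst (f h) \<in> set Es \<and> snd (f h) \<in> vtx r nG \<and>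
     (\<exists>k<fst (snd (f h)). fst (f h) $$ (idx nG (snd (f h),k), idx nH (h,0)) \<noteq> 0)" by blast
  define Ech where "Ech h = fst (f h)" for h
  define \<phi> where "\<phi> h = snd (f h)" for h
  have EchS: "Ech h \<in> set Es" and phi: "\<phi> h \<in> vtx r nG"
    and nz0: "\<exists>k<fst (\<phi> h). Ech h $$ (idx nG (\<phi> h,k), idx nH (h,0)) \<noteq> 0" if "h \<in> vtx r nH" for h
    using f that unfolding Ech_def \<phi>_def by auto
  have EchC: "Ech h \<in> carrier_mat (ncg_dim r nG) (ncg_dim r nH)" if "h \<in> vtx r nH" for h
    using Ec EchS[OF that] by blast
  define V where "V h = mat (fst (\<phi> h)) (fst h) (\<lambda>(k,l). Ech h $$ (idx nG (\<phi> h, k), idx nH (h,l)))" for h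
  have Vc: "V h \<in> carrier_mat (fst (\<phi> h)) (fst h)" for h unfolding V_def by simp
  have Vi: "k < fst (\<phi> h) \<Longrightarrow> l < fst h \<Longrightarrow> V h $$ (k,l) = Ech h $$ (idx nG (\<phi> h, k), idx nH (h,l))" for h k l
    unfolding V_def by simp
  have key: "\<exists>c. \<forall>l1<fst h1. \<forall>l2<fst h2. (mat_adjoint (V h1) * V h2) $$ (l1,l2) = (if l1 = l2 \<and> simeq EH h1 h2 then c else 0)"
    if h1: "h1 \<in> vtx r nH" and h2: "h2 \<in> vtx r nH" and sG: "simeq EG (\<phi> h1) (\<phi> h2)" for h1 h2
  proof -
    have ff: "fst (\<phi> h1) = fst (\<phi> h2)" using sG unfolding simeq_def by auto
    have ph: "\<phi> h1 \<in> vtx r nG" "\<phi> h2 \<in> vtx r nG" using phi h1 h2 by auto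
    define P where "P = bmat r nG nG (\<lambda>(g1,k1) (g2,k2). if g1 = \<phi> h1 \<and> g2 = \<phi> h2 \<and> k1 = k2 then 1 else 0)"
    have Pc: "P \<in> carrier_mat (ncg_dim r nG) (ncg_dim r nG)" unfolding P_def by (rule bmat_carrier)
    have Pi: "P $$ (idx nG (g1,k1), idx nG (g2,k2)) = (if g1 = \<phi> h1 \<and> g2 = \<phi> h2 \<and> k1 = k2 then 1 else 0)"
      if "g1 \<in> vtx r nG" "k1 < fst g1" "g2 \<in> vtx r nG" "k2 < fst g2" for g1 k1 g2 k2
      unfolding P_def using that by (simp add: bmat_idx)
    have "Sform r nG EG P" unfolding Sform_def
    proof (intro exI[of _ "\<lambda>g1 g2. if g1 = \<phi> h1 \<and> g2 = \<phi> h2 then 1 else 0"] ballI allI impI)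
      fix g1 k1 g2 k2 assume "g1 \<in> vtx r nG" "k1 < fst g1" "g2 \<in> vtx r nG" "k2 < fst g2"
      then show "P $$ (idx nG (g1,k1), idx nG (g2,k2)) = (if k1 = k2 \<and> simeq EG g1 g2 then (if g1 = \<phi> h1 \<and> g2 = \<phi> h2 then 1 else 0) else 0)"
        using Pi sG by auto
    qed
    then have PS: "P \<in> ncg_S r nG EG" using Pc S_char by blast
    define M where "M = mat_adjoint (Ech h1) * P * Ech h2"
    have "M \<in> ncg_S r nH EH" unfolding M_def using clos EchS[OF h1] EchS[OF h2] PS by blast
    then have "Sform r nH EH M" using S_char by blast
    then obtain aT where aT: "\<forall>g\<in>vtx r nH. \<forall>k<fst g. \<forall>g'\<in>vtx r nH. \<forall>k'<fst g'.
      M $$ (idx nH (g,k), idx nH (g',k')) = (if k = k' \<and> simeq EH g g' then aT g g' else 0)"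
      unfolding Sform_def by blast
    show ?thesis
    proof (intro exI[of _ "aT h1 h2"] allI impI)
      fix l1 l2 assume l1: "l1 < fst h1" and l2: "l2 < fst h2"
      define p q where "p = idx nH (h1,l1)" and "q = idx nH (h2,l2)"
      have p: "p < ncg_dim r nH" and q: "q < ncg_dim r nH" unfolding p_def q_def using idx_lt h1 h2 l1 l2 by auto
      have "(mat_adjoint (V h1) * V h2) $$ (l1,l2) = (\<Sum>k<fst (\<phi> h1). cnj (V h1 $$ (k,l1)) * V h2 $$ (k,l2))"
        using double_entry[OF Vc[of h1] _ l1 l2, of "V h2"] Vc[of h2] ff by simp
      also have "\<dots> = (\<Sum>k<fst (\<phi> h1). cnj (Ech h1 $$ (idx nG (\<phi> h1,k), p)) * Ech h2 $$ (idx nG (\<phi> h2,k), q))"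
        using l1 l2 ff unfolding p_def q_def by (intro sum.cong refl) (simp add: Vi)
      also have "\<dots> = M $$ (p,q)"
      proof -
        define F where "F g k g' k' = cnj (Ech h1 $$ (idx nG (g,k), p)) * Ech h2 $$ (idx nG (g',k'), q)" for g k g' k'
        have "M $$ (p,q) = (\<Sum>g'\<in>vtx r nG. \<Sum>k'<fst g'. \<Sum>g\<in>vtx r nG. \<Sum>k<fst g.
             cnj (Ech h1 $$ (idx nG (g,k), p)) * P $$ (idx nG (g,k), idx nG (g',k')) * Ech h2 $$ (idx nG (g',k'), q))"
          unfolding M_def by (rule triple_idx[OF EchC[OF h1] Pc EchC[OF h2] p q])
        also have "\<dots> = (\<Sum>g'\<in>vtx r nG. \<Sum>k'<fst g'. \<Sum>g\<in>vtx r nG. \<Sum>k<fst g.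
             if g = \<phi> h1 then (if g' = \<phi> h2 then (if k = k' then F g k g' k' else 0) else 0) else 0)"
          by (intro sum.cong refl) (auto simp: Pi F_def)
        also have "\<dots> = (\<Sum>g'\<in>vtx r nG. \<Sum>k'<fst g'. \<Sum>k<fst (\<phi> h1).
             if g' = \<phi> h2 then (if k = k' then F (\<phi> h1) k g' k' else 0) else 0)"
          by (intro sum.cong refl collapse ph)
        also have "\<dots> = (\<Sum>g'\<in>vtx r nG. \<Sum>k'<fst g'. if g' = \<phi> h2 then (\<Sum>k<fst (\<phi> h1). if k = k' then F (\<phi> h1) k g' k' else 0) else 0)"
          by (simp only: sum_if_out)
        also have "\<dots> = (\<Sum>k'<fst (\<phi> h2). \<Sum>k<fst (\<phi> h1). if k = k' then F (\<phi> h1) k (\<phi> h2) k' else 0)"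
          by (rule collapse[OF ph(2)])
        also have "\<dots> = (\<Sum>k'<fst (\<phi> h2). F (\<phi> h1) k' (\<phi> h2) k')"
          using ff by (intro sum.cong refl) (auto simp: sum.delta)
        finally show ?thesis unfolding F_def using ff by simp
      qed
      also have "\<dots> = (if l1 = l2 \<and> simeq EH h1 h2 then aT h1 h2 else 0)"
        unfolding p_def q_def using aT h1 h2 l1 l2 by blast
      finally show "(mat_adjoint (V h1) * V h2) $$ (l1,l2) = (if l1 = l2 \<and> simeq EH h1 h2 then aT h1 h2 else 0)" .
    qed
  qed
  define \<rho> where "\<rho> h = sqrt (\<Sum>k<fst (\<phi> h). (cmod (V h $$ (k,0)))^2)" for h
  have \<rho>pos: "0 < \<rho> h" if h: "h \<in> vtx r nH" for h
  proof -
    obtain k where k: "k < fst (\<phi> h)" "Ech h $$ (idx nG (\<phi> h,k), idx nH (h,0)) \<noteq> 0" using nz0[OF h] by blast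
    have h0: "0 < fst h" using vtx_D[OF h] by auto
    have "V h $$ (k,0) \<noteq> 0" using k h0 Vi by simp
    then have "0 < (\<Sum>k<fst (\<phi> h). (cmod (V h $$ (k,0)))^2)"
      using k by (intro sum_pos2[of _ k]) auto
    then show ?thesis unfolding \<rho>_def by simp
  qed
  define U where "U h = complex_of_real (1 / \<rho> h) \<cdot>\<^sub>m V h" for h
  have Uc: "U h \<in> carrier_mat (fst (\<phi> h)) (fst h)" for h unfolding U_def using Vc by simp
  have UUV: "(mat_adjoint (U h1) * U h2) $$ (l1,l2) = complex_of_real (1 / (\<rho> h1 * \<rho> h2)) * (mat_adjoint (V h1) * V h2) $$ (l1,l2)"
    if ff: "fst (\<phi> h1) = fst (\<phi> h2)" and l1: "l1 < fst h1" and l2: "l2 < fst h2" for h1 h2 l1 l2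
  proof -
    have Vc2: "V h2 \<in> carrier_mat (fst (\<phi> h1)) (fst h2)" "U h2 \<in> carrier_mat (fst (\<phi> h1)) (fst h2)"
      using Vc[of h2] Uc[of h2] ff by auto
    have "(mat_adjoint (U h1) * U h2) $$ (l1,l2) = (\<Sum>k<fst (\<phi> h1). cnj (U h1 $$ (k,l1)) * U h2 $$ (k,l2))"
      by (rule double_entry[OF Uc Vc2(2) l1 l2])
    also have "\<dots> = (\<Sum>k<fst (\<phi> h1). complex_of_real (1 / (\<rho> h1 * \<rho> h2)) * (cnj (V h1 $$ (k,l1)) * V h2 $$ (k,l2)))"
      using l1 l2 ff Vc[of h1] Vc[of h2] by (intro sum.cong refl) (simp add: U_def)
    also have "\<dots> = complex_of_real (1 / (\<rho> h1 * \<rho> h2)) * (mat_adjoint (V h1) * V h2) $$ (l1,l2)"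
      by (simp add: sum_distrib_left double_entry[OF Vc Vc2(1) l1 l2])
    finally show ?thesis .
  qed
  have sref: "simeq E g g" for E g unfolding simeq_def by simp
  have UU: "mat_adjoint (U h) * U h = 1\<^sub>m (fst h)" if h: "h \<in> vtx r nH" for h
  proof -
    obtain c where c: "\<forall>l1<fst h. \<forall>l2<fst h. (mat_adjoint (V h) * V h) $$ (l1,l2) = (if l1 = l2 \<and> simeq EH h h then c else 0)"
      using key[OF h h sref] by blast
    have h0: "0 < fst h" using vtx_D[OF h] by auto
    have "(mat_adjoint (V h) * V h) $$ (0,0) = (\<Sum>k<fst (\<phi> h). cnj (V h $$ (k,0)) * V h $$ (k,0))"
      by (rule double_entry[OF Vc Vc h0 h0])
    also have "\<dots> = (\<Sum>k<fst (\<phi> h). complex_of_real ((cmod (V h $$ (k,0)))^2))"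
      by (simp add: cnj_mult_self)
    also have "\<dots> = complex_of_real ((\<rho> h)^2)" unfolding \<rho>_def by (simp add: sum_nonneg)
    finally have c0: "c = complex_of_real ((\<rho> h)^2)" using c h0 sref by auto
    have rp: "0 < \<rho> h" by (rule \<rho>pos[OF h])
    show ?thesis
    proof (rule eq_matI)
      fix l1 l2 assume "l1 < dim_row (1\<^sub>m (fst h))" "l2 < dim_col (1\<^sub>m (fst h))"
      then have l: "l1 < fst h" "l2 < fst h" by auto
      have "(mat_adjoint (U h) * U h) $$ (l1,l2) = complex_of_real (1 / (\<rho> h * \<rho> h)) * (if l1 = l2 then c else 0)"
        using UUV[OF refl l] c l sref by simp
      also have "\<dots> = 1\<^sub>m (fst h) $$ (l1,l2)" using c0 rp l
        by (simp add: power2_eq_square field_simps flip: of_real_mult)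
      finally show "(mat_adjoint (U h) * U h) $$ (l1,l2) = 1\<^sub>m (fst h) $$ (l1,l2)" .
    qed (use adj_carrier[OF Uc[of h]] Uc[of h] in auto)
  qed
  show ?thesis
  proof (intro exI[of _ \<phi>] exI[of _ U] conjI ballI impI)
    show "\<phi> h \<in> vtx r nG" if "h \<in> vtx r nH" for h using phi that .
    show "U h \<in> carrier_mat (piv (\<phi> h)) (piv h)" for h unfolding piv_def by (rule Uc)
    show "mat_adjoint (U h) * U h = 1\<^sub>m (piv h)" if "h \<in> vtx r nH" for h unfolding piv_def by (rule UU[OF that])
  next
    fix h h' assume h: "h \<in> vtx r nH" and h': "h' \<in> vtx r nH" and nH: "\<not> simeq EH h h'"
    show "\<not> simeq EG (\<phi> h) (\<phi> h') \<or> mat_adjoint (U h) * U h' = 0\<^sub>m (piv h) (piv h')"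
    proof (cases "simeq EG (\<phi> h) (\<phi> h')")
      case False then show ?thesis by simp
    next
      case True
      then have sG: "simeq EG (\<phi> h) (\<phi> h')" by simp
      then have ff: "fst (\<phi> h) = fst (\<phi> h')" unfolding simeq_def by auto
      obtain c where c: "\<forall>l1<fst h. \<forall>l2<fst h'. (mat_adjoint (V h) * V h') $$ (l1,l2) = (if l1 = l2 \<and> simeq EH h h' then c else 0)"
        using key[OF h h' sG] by blast
      have "mat_adjoint (U h) * U h' = 0\<^sub>m (piv h) (piv h')"
      proof (rule eq_matI)
        fix l1 l2 assume "l1 < dim_row (0\<^sub>m (piv h) (piv h'))" "l2 < dim_col (0\<^sub>m (piv h) (piv h'))"
        then have l: "l1 < fst h" "l2 < fst h'" unfolding piv_def by auto
        show "(mat_adjoint (U h) * U h') $$ (l1,l2) = 0\<^sub>m (piv h) (piv h') $$ (l1,l2)"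
          using UUV[OF ff l] c l nH unfolding piv_def by simp
      next
        show "dim_row (mat_adjoint (U h) * U h') = dim_row (0\<^sub>m (piv h) (piv h'))"
          using adj_carrier[OF Uc[of h]] by (simp add: piv_def)
      next
        show "dim_col (mat_adjoint (U h) * U h') = dim_col (0\<^sub>m (piv h) (piv h'))"
          using Uc[of h'] by (simp add: piv_def)
      qed
      then show ?thesis by simp
    qed
  next
    fix h h' assume h: "h \<in> vtx r nH" and h': "h' \<in> vtx r nH" and ss: "simeq EH h h' \<and> simeq EG (\<phi> h) (\<phi> h')"
    then have ff: "fst (\<phi> h) = fst (\<phi> h')" and fh: "fst h = fst h'" unfolding simeq_def by auto
    obtain c where c: "\<forall>l1<fst h. \<forall>l2<fst h'. (mat_adjoint (V h) * V h') $$ (l1,l2) = (if l1 = l2 \<and> simeq EH h h' then c else 0)"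
      using key[OF h h'] ss by blast
    show "\<exists>c. mat_adjoint (U h) * U h' = c \<cdot>\<^sub>m 1\<^sub>m (piv h)"
    proof (intro exI[of _ "complex_of_real (1 / (\<rho> h * \<rho> h')) * c"] eq_matI)
      fix l1 l2 assume "l1 < dim_row (complex_of_real (1 / (\<rho> h * \<rho> h')) * c \<cdot>\<^sub>m 1\<^sub>m (piv h))"
        "l2 < dim_col (complex_of_real (1 / (\<rho> h * \<rho> h')) * c \<cdot>\<^sub>m 1\<^sub>m (piv h))"
      then have l: "l1 < fst h" "l2 < fst h'" using fh unfolding piv_def by auto
      show "(mat_adjoint (U h) * U h') $$ (l1,l2) = (complex_of_real (1 / (\<rho> h * \<rho> h')) * c \<cdot>\<^sub>m 1\<^sub>m (piv h)) $$ (l1,l2)"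
        using UUV[OF ff l] c l ss fh unfolding piv_def by simp
    qed (use adj_carrier[OF Uc[of h]] Uc[of h'] fh in \<open>auto simp: piv_def\<close>)
  qed
qed

theorem lemma3p5:
  fixes r :: nat
    and nG nH :: "nat \<Rightarrow> nat"
    and EG EH :: "nat \<Rightarrow> nat \<Rightarrow> nat \<Rightarrow> bool"
  assumes "\<forall>d\<in>{1..r}. simple_graph (nG d) (EG d)"
    and "\<forall>d\<in>{1..r}. simple_graph (nH d) (EH d)"
  shows "cohom (ncg_S r nH EH) (ncg_dim r nH) (ncg_S r nG EG) (ncg_dim r nG) \<longleftrightarrow>
    (\<exists>(\<phi> :: nat \<times> nat \<Rightarrow> nat \<times> nat) (U :: nat \<times> nat \<Rightarrow> complex mat).
       (\<forall>h\<in>vtx r nH. \<phi> h \<in> vtx r nG) \<and>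
       (\<forall>h\<in>vtx r nH. U h \<in> carrier_mat (piv (\<phi> h)) (piv h) \<and>
                        mat_adjoint (U h) * U h = 1\<^sub>m (piv h)) \<and>
       (\<forall>h\<in>vtx r nH. \<forall>h'\<in>vtx r nH.
          (\<not> simeq EH h h' \<longrightarrow>
             \<not> simeq EG (\<phi> h) (\<phi> h') \<or> mat_adjoint (U h) * U h' = 0\<^sub>m (piv h) (piv h')) \<and>
          (simeq EH h h' \<and> simeq EG (\<phi> h) (\<phi> h') \<longrightarrow>
             (\<exists>c :: complex. mat_adjoint (U h) * U h' = c \<cdot>\<^sub>m 1\<^sub>m (piv h)))))"
proof
  assume "cohom (ncg_S r nH EH) (ncg_dim r nH) (ncg_S r nG EG) (ncg_dim r nG)"
  then show "\<exists>(\<phi> :: nat \<times> nat \<Rightarrow> nat \<times> nat) (U :: nat \<times> nat \<Rightarrow> complex mat).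
       (\<forall>h\<in>vtx r nH. \<phi> h \<in> vtx r nG) \<and>
       (\<forall>h\<in>vtx r nH. U h \<in> carrier_mat (piv (\<phi> h)) (piv h) \<and>
                        mat_adjoint (U h) * U h = 1\<^sub>m (piv h)) \<and>
       (\<forall>h\<in>vtx r nH. \<forall>h'\<in>vtx r nH.
          (\<not> simeq EH h h' \<longrightarrow>
             \<not> simeq EG (\<phi> h) (\<phi> h') \<or> mat_adjoint (U h) * U h' = 0\<^sub>m (piv h) (piv h')) \<and>
          (simeq EH h h' \<and> simeq EG (\<phi> h) (\<phi> h') \<longrightarrow>
             (\<exists>c :: complex. mat_adjoint (U h) * U h' = c \<cdot>\<^sub>m 1\<^sub>m (piv h))))"
    by (rule dir12)
next
  assume "\<exists>(\<phi> :: nat \<times> nat \<Rightarrow> nat \<times> nat) (U :: nat \<times> nat \<Rightarrow> complex mat).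
       (\<forall>h\<in>vtx r nH. \<phi> h \<in> vtx r nG) \<and>
       (\<forall>h\<in>vtx r nH. U h \<in> carrier_mat (piv (\<phi> h)) (piv h) \<and>
                        mat_adjoint (U h) * U h = 1\<^sub>m (piv h)) \<and>
       (\<forall>h\<in>vtx r nH. \<forall>h'\<in>vtx r nH.
          (\<not> simeq EH h h' \<longrightarrow>
             \<not> simeq EG (\<phi> h) (\<phi> h') \<or> mat_adjoint (U h) * U h' = 0\<^sub>m (piv h) (piv h')) \<and>
          (simeq EH h h' \<and> simeq EG (\<phi> h) (\<phi> h') \<longrightarrow>
             (\<exists>c :: complex. mat_adjoint (U h) * U h' = c \<cdot>\<^sub>m 1\<^sub>m (piv h))))"
  then obtain \<phi> :: "nat \<times> nat \<Rightarrow> nat \<times> nat" and U :: "nat \<times> nat \<Rightarrow> complex mat" where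
    a: "\<forall>h\<in>vtx r nH. \<phi> h \<in> vtx r nG" and
    b: "\<forall>h\<in>vtx r nH. U h \<in> carrier_mat (piv (\<phi> h)) (piv h) \<and> mat_adjoint (U h) * U h = 1\<^sub>m (piv h)" and
    c: "\<forall>h\<in>vtx r nH. \<forall>h'\<in>vtx r nH.
          (\<not> simeq EH h h' \<longrightarrow>
             \<not> simeq EG (\<phi> h) (\<phi> h') \<or> mat_adjoint (U h) * U h' = 0\<^sub>m (piv h) (piv h')) \<and>
          (simeq EH h h' \<and> simeq EG (\<phi> h) (\<phi> h') \<longrightarrow>
             (\<exists>c :: complex. mat_adjoint (U h) * U h' = c \<cdot>\<^sub>m 1\<^sub>m (piv h)))"
    by blast
  show "cohom (ncg_S r nH EH) (ncg_dim r nH) (ncg_S r nG EG) (ncg_dim r nG)"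
    by (rule dir21[OF a b c])
qed

end
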